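(* For all sufficiently large $R$ the following holds. Let $V\subset\mathcal D_R$ be a finite set of points and $G_V$ the graph on $V$ in which distinct points are adjacent iff their hyperbolic distance is at most $R$. Let $(i,j)$ be admissible, let $S$ be the set of points of $V$ lying in tiles below $T_{i,j}$ other than $T_{i,j}$ itself, and let $y=|V\cap T_{i,j}|$. Suppose $y\ge 3$ and $G_V[S]$ can be covered by $x$ vertex-disjoint cycles and isolated vertices. Then $G_V[S\cup(V\cap T_{i,j})]$ can be covered by $\max\{1,x-y+1\}$ vertex-disjoint cycles and isolated vertices. Furthermore, if $y>x$, then $G_V[S\cup(V\cap T_{i,j})]$ has a Hamilton cycle (i.e. can be covered by a single cycle) exactly $y-x$ of whose edges have both endpoints in $T_{i,j}$.
   Context: $\mathcal D_R$ is the hyperbolic disk (curvature $-1$) of radius $R$ around the origin, with polar coordinates $(r,\theta)$, $r\in[0,R)$, $\theta\in(0,2\pi]$. Tiling: $i_{\max}=\lceil 0.9R/(2\ln 2)\rceil$, $n_i=2^{4-i+\lfloor R/(2\ln 2)\rfloor}$ for integers $0\le i\le i_{\max}$; $(i,j)$ is admissible if $0\le i\le i_{\max}$, $0\le j<n_i$; $T_{i,j}=\{(r,\theta)\in\mathcal D_R:\ R-2(i+1)\ln 2\le r<R-2i\ln 2,\ 2\pi j/n_i<\theta\le 2\pi(j+1)/n_i\}$. A tile $T_{i',j'}$ is below $T_{i,j}$ if $i'\le i$ and $T_{i',j'}$ is contained in the sector $\{(r,\theta): 2\pi j/n_i<\theta\le 2\pi(j+1)/n_i\}$. A graph $H$ is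 covered by $k$ vertex-disjoint cycles and isolated vertices if its vertex set can be partitioned into $k$ parts, each of which is either a single vertex or the vertex set of a cycle (of length at least $3$) in $H$. *)

theory Defs
  imports Complex_Main
begin

text \<open>Points of the hyperbolic plane in polar coordinates (r, theta).\<close>
type_synonym hpoint = "real \<times> real"

definition hdisk :: "real \<Rightarrow> hpoint set" where
  "hdisk R = {(r, t). 0 \<le> r \<and> r < R \<and> 0 < t \<and> t \<le> 2 * pi}"

text \<open>Hyperbolic distance (curvature -1) via the hyperbolic law of cosines.\<close>
definition hdist :: "hpoint \<Rightarrow> hpoint \<Rightarrow> real" where
  "hdist p q = arcosh (cosh (fst p) * cosh (fst q) - sinh (fst p) * sinh (fst q) * cos (snd p - snd q))"

definition hadj :: "real \<Rightarrow> hpoint \<Rightarrow> hpoint \<Rightarrow> bool" where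
  "hadj R p q \<longleftrightarrow> p \<noteq> q \<and> hdist p q \<le> R"

definition imax :: "real \<Rightarrow> int" where
  "imax R = \<lceil>0.9 * R / (2 * ln 2)\<rceil>"

definition ntiles :: "real \<Rightarrow> nat \<Rightarrow> real" where
  "ntiles R i = (2::real) powr (of_int (4 - int i + \<lfloor>R / (2 * ln 2)\<rfloor>))"

definition admissible :: "real \<Rightarrow> nat \<Rightarrow> nat \<Rightarrow> bool" where
  "admissible R i j \<longleftrightarrow> int i \<le> imax R \<and> real j < ntiles R i"

definition sector :: "real \<Rightarrow> nat \<Rightarrow> nat \<Rightarrow> hpoint set" where
  "sector R i j = {(r, t). 2 * pi * real j / ntiles R i < t \<and> t \<le> 2 * pi * (real j + 1) / ntiles R i}"

definition tile :: "real \<Rightarrow> nat \<Rightarrow> nat \<Rightarrow> hpoint set" where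
  "tile R i j = {(r, t) \<in> hdisk R. R - 2 * (real i + 1) * ln 2 \<le> r \<and> r < R - 2 * real i * ln 2}
                 \<inter> sector R i j"

definition below :: "real \<Rightarrow> nat \<Rightarrow> nat \<Rightarrow> nat \<Rightarrow> nat \<Rightarrow> bool" where
  "below R i' j' i j \<longleftrightarrow> i' \<le> i \<and> tile R i' j' \<subseteq> sector R i j"

definition is_cycle :: "('a \<Rightarrow> 'a \<Rightarrow> bool) \<Rightarrow> 'a list \<Rightarrow> bool" where
  "is_cycle adj vs \<longleftrightarrow> length vs \<ge> 3 \<and> distinct vs \<and>
     (\<forall>k < length vs. adj (vs ! k) (vs ! ((k + 1) mod length vs)))"

definition covered :: "('a \<Rightarrow> 'a \<Rightarrow> bool) \<Rightarrow> 'a set \<Rightarrow> nat \<Rightarrow> bool" where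
  "covered adj W k \<longleftrightarrow> (\<exists>P. finite P \<and> \<Union>P = W \<and> pairwise disjnt P \<and> {} \<notin> P \<and> card P = k \<and>
     (\<forall>p\<in>P. (\<exists>v. p = {v}) \<or> (\<exists>vs. is_cycle adj vs \<and> set vs = p)))"

definition edges_inside :: "'a list \<Rightarrow> 'a set \<Rightarrow> nat" where
  "edges_inside vs T = card {k. k < length vs \<and> vs ! k \<in> T \<and> vs ! ((k + 1) mod length vs) \<in> T}"

end

theory Submission
  imports Defs
begin


lemma one_minus_cos_le: "1 - cos (d::real) \<le> d^2 / 2"
proof -
  have "cos d = 1 - 2 * sin (d/2) ^ 2" using cos_double_sin[of "d/2"] by simp
  moreover have "sin (d/2) ^ 2 \<le> (d/2)^2"
    using abs_sin_x_le_abs_x[of "d/2"] by (metis abs_ge_zero power2_abs power_mono)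
  ultimately show ?thesis by (simp add: power_divide)
qed

lemma sinh_le_half_exp: "sinh (x::real) \<le> exp x / 2"
  by (simp add: sinh_field_def)

lemma cosh_le_exp_abs: "cosh (x::real) \<le> exp \<bar>x\<bar>"
proof -
  have h: "exp x \<le> exp \<bar>x\<bar>" "exp (-x) \<le> exp \<bar>x\<bar>" by auto
  have "cosh x = (exp x + exp (-x)) / 2" by (simp add: cosh_field_def)
  thus ?thesis using h by argo
qed

lemma geo:
  fixes R a b t1 t2 :: real and i j :: nat
  assumes R: "R \<ge> 500" and ii: "int i \<le> imax R"
  and a1: "R - 2*(real i+1)*ln 2 \<le> a" and a2: "a < R - 2*real i*ln 2" and a3: "0 \<le> a"
  and b1: "R - 2*(real i+1)*ln 2 \<le> b" and b2: "b < R" and b3: "0 \<le> b"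
  and s1: "(a,t1) \<in> sector R i j" and s2: "(b,t2) \<in> sector R i j"
  shows "hdist (a,t1) (b,t2) \<le> R"
proof -
  define n where "n = ntiles R i"
  define c where "c = real i * ln 2"
  define d where "d = t1 - t2"
  have npos: "n > 0" unfolding n_def ntiles_def by simp
  have dd: "\<bar>d\<bar> < 2*pi/n"
  proof -
    have "2*pi*real j/n < t1" "t1 \<le> 2*pi*(real j+1)/n" "2*pi*real j/n < t2" "t2 \<le> 2*pi*(real j+1)/n"
      using s1 s2 unfolding sector_def n_def by auto
    moreover have "2*pi*(real j+1)/n = 2*pi*real j/n + 2*pi/n" using npos by (simp add: field_simps)
    ultimately show ?thesis unfolding d_def by linarith
  qed
  have d2: "d^2 \<le> (2*pi/n)^2"
    using dd by (metis abs_ge_zero less_imp_le power2_abs power_mono)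
  have nlow: "n \<ge> 8 * exp (R/2 - c)"
  proof -
    have fl: "real_of_int \<lfloor>R / (2 * ln 2)\<rfloor> \<ge> R/(2*ln 2) - 1"
    proof -
      have "R / (2 * ln 2) < of_int \<lfloor>R / (2 * ln 2)\<rfloor> + 1"
        by (rule floor_le_iff[THEN iffD1]) simp
      thus ?thesis by linarith
    qed
    have "n = 2 powr (4 - real i + real_of_int \<lfloor>R / (2 * ln 2)\<rfloor>)"
      unfolding n_def ntiles_def by simp
    also have "\<dots> \<ge> 2 powr (3 - real i + R/(2*ln 2))"
      by (intro powr_mono; use fl in linarith)
    finally have "n \<ge> 2 powr (3 - real i + R/(2*ln 2))" .
    moreover have "2 powr (3 - real i + R/(2*ln 2)) = 8 * exp (R/2 - c)"
    proof -
      have "2 powr (3 - real i + R/(2*ln 2)) = exp (ln 2 * (3 - real i + R/(2*ln 2)))"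
        by (simp add: powr_def)
      also have "ln 2 * (3 - real i + R/(2*ln 2)) = 3 * ln 2 + (R/2 - c)"
        unfolding c_def by (simp add: field_simps)
      also have "exp \<dots> = exp (3 * ln 2) * exp (R/2 - c)" by (simp add: exp_add)
      also have "exp (3 * ln 2) = (8::real)"
        using exp_of_nat_mult[of 3 "ln (2::real)"] by simp
      finally show ?thesis .
    qed
    ultimately show ?thesis by simp
  qed
  have n2: "n^2 \<ge> 64 * exp (R - 2*c)"
  proof -
    have "(8 * exp (R/2 - c))^2 \<le> n^2" using nlow by (intro power_mono) auto
    moreover have "(8 * exp (R/2 - c))^2 = 64 * exp (R - 2*c)"
      by (simp add: power2_eq_square exp_add[symmetric])
    ultimately show ?thesis by simp
  qed
  define E where "E = cosh a * cosh b - sinh a * sinh b * cos d"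
  have Eeq: "E = cosh (a - b) + sinh a * sinh b * (1 - cos d)"
    unfolding E_def cosh_diff by (simp add: algebra_simps)
  have sab: "sinh a * sinh b \<ge> 0" using a3 b3 by simp
  have E1: "E \<ge> 1"
  proof -
    have "0 \<le> sinh a * sinh b * (1 - cos d)" using sab cos_le_one[of d] by simp
    thus ?thesis using Eeq cosh_real_ge_1[of "a-b"] by linarith
  qed
  have trm: "sinh a * sinh b * (1 - cos d) \<le> pi^2/128 * exp R"
  proof -
    have "sinh a * sinh b * (1 - cos d) \<le> (exp a / 2) * (exp b / 2) * (d^2/2)"
      using sab one_minus_cos_le[of d] sinh_le_half_exp[of a] sinh_le_half_exp[of b] a3 b3
      by (intro mult_mono) (auto simp: cos_le_one)
    also have "\<dots> = exp (a+b) * d^2 / 8" by (simp add: exp_add)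
    also have "\<dots> \<le> exp (2*R - 2*c) * (2*pi/n)^2 / 8"
    proof -
      have "a + b \<le> 2*R - 2*c" using a2 b2 unfolding c_def by simp
      hence "exp (a+b) \<le> exp (2*R - 2*c)" by simp
      thus ?thesis using d2 by (intro divide_right_mono mult_mono) auto
    qed
    also have "\<dots> = exp (2*R - 2*c) * pi^2 / (2 * n^2)"
      using npos by (simp add: field_simps power2_eq_square)
    also have "\<dots> \<le> exp (2*R - 2*c) * pi^2 / (2 * (64 * exp (R - 2*c)))"
      using n2 npos by (intro divide_left_mono) auto
    also have "\<dots> = pi^2/128 * exp R"
    proof -
      have "exp (2*R - 2*c) = exp R * exp (R - 2*c)" by (simp add: exp_add[symmetric])
      thus ?thesis by (simp add: field_simps)
    qed
    finally show ?thesis .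
  qed
  have ib: "real i < 0.9 * R / (2 * ln 2) + 1"
  proof -
    have "real_of_int (int i) \<le> real_of_int (imax R)" using ii by linarith
    moreover have "real_of_int (imax R) < 0.9 * R / (2 * ln 2) + 1"
      unfolding imax_def using ceiling_correct[of "0.9 * R / (2 * ln 2)"] by simp
    ultimately show ?thesis by simp
  qed
  have cb: "2 * c < 0.9 * R + 2 * ln 2"
  proof -
    have "2 * c = real i * (2 * ln 2)" unfolding c_def by simp
    also have "\<dots> < (0.9 * R / (2 * ln 2) + 1) * (2 * ln 2)"
      using ib by (intro mult_strict_right_mono) auto
    also have "\<dots> = 0.9 * R + 2 * ln 2" by (simp add: field_simps)
    finally show ?thesis .
  qed
  have ch: "cosh (a - b) \<le> 16 * exp (0.9 * R)"
  proof -
    have c0: "c \<ge> 0" unfolding c_def by simp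
    have "R - 2*c - 2*ln 2 \<le> a" "a < R - 2*c" "R - 2*c - 2*ln 2 \<le> b"
      using a1 a2 b1 unfolding c_def by (simp_all add: algebra_simps)
    hence "\<bar>a - b\<bar> \<le> 2*c + 2 * ln 2" using b2 c0 by linarith
    hence "\<bar>a - b\<bar> \<le> 0.9 * R + 4 * ln 2" using cb by simp
    hence "exp \<bar>a - b\<bar> \<le> exp (0.9 * R + 4 * ln 2)" by simp
    also have "\<dots> = 16 * exp (0.9 * R)"
      using exp_of_nat_mult[of 4 "ln (2::real)"] by (simp add: exp_add)
    finally show ?thesis using cosh_le_exp_abs[of "a-b"] by simp
  qed
  have big: "16 * exp (0.9 * R) \<le> (8/25) * exp R"
  proof -
    have "exp (0.1 * R) \<ge> 1 + 0.1 * R" by (rule exp_ge_add_one_self_aux) (use R in simp)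
    hence e: "exp (0.1 * R) \<ge> 50" using R by linarith
    have "exp R = exp (0.9 * R) * exp (0.1 * R)" by (simp add: exp_add[symmetric])
    thus ?thesis using e by simp
  qed
  have pi2: "pi^2/128 \<le> (1/8::real)"
  proof -
    have "pi^2 \<le> (4::real)^2" using pi_less_4 pi_ge_zero
      by (intro power_mono) auto
    thus ?thesis by simp
  qed
  have p3: "pi^2/128 * exp R \<le> (1/8) * exp R"
    using pi2 by (intro mult_right_mono) auto
  have "E \<le> exp R / 2"
    using Eeq trm ch big p3 exp_gt_zero[of R] by linarith
  also have "\<dots> \<le> cosh R" by (simp add: cosh_field_def)
  finally have Ec: "E \<le> cosh R" .
  have "hdist (a,t1) (b,t2) = arcosh E" unfolding hdist_def E_def d_def by simp
  also have "\<dots> \<le> arcosh (cosh R)"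
  proof (cases "E = cosh R")
    case False
    hence "E < cosh R" using Ec by simp
    from arcosh_real_strict_mono[OF E1 this] show ?thesis by (rule less_imp_le)
  qed simp
  also have "\<dots> = R" using R by (simp add: arcosh_cosh_real)
  finally show ?thesis .
qed



fun pth :: "('a \<Rightarrow> 'a \<Rightarrow> bool) \<Rightarrow> 'a list \<Rightarrow> bool" where
  "pth adj (x#y#zs) = (adj x y \<and> pth adj (y#zs))"
| "pth adj _ = True"

fun pin :: "'a set \<Rightarrow> 'a list \<Rightarrow> nat" where
  "pin B (x#y#zs) = (if x \<in> B \<and> y \<in> B then 1 else 0) + pin B (y#zs)"
| "pin B _ = 0"

lemma pth_Cons: "pth adj (v#ys) = (ys = [] \<or> (adj v (hd ys) \<and> pth adj ys))"
  by (cases ys) auto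

lemma pin_Cons: "pin B (v#ys) = (if ys \<noteq> [] \<and> v \<in> B \<and> hd ys \<in> B then 1 else 0) + pin B ys"
  by (cases ys) auto

lemma pth_append:
  "pth adj (xs @ ys) = (pth adj xs \<and> pth adj ys \<and> (xs \<noteq> [] \<and> ys \<noteq> [] \<longrightarrow> adj (last xs) (hd ys)))"
  by (induction xs) (auto simp: pth_Cons)

lemma pin_append:
  "pin B (xs @ ys) = pin B xs + pin B ys + (if xs \<noteq> [] \<and> ys \<noteq> [] \<and> last xs \<in> B \<and> hd ys \<in> B then 1 else 0)"
  by (induction xs) (auto simp: pin_Cons)

lemma pth_nth: "pth adj xs = (\<forall>k. Suc k < length xs \<longrightarrow> adj (xs!k) (xs!Suc k))"
proof (induction adj xs rule: pth.induct)
  case (1 adj x y zs)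
  show ?case
  proof
    assume "pth adj (x # y # zs)"
    thus "\<forall>k. Suc k < length (x # y # zs) \<longrightarrow> adj ((x # y # zs) ! k) ((x # y # zs) ! Suc k)"
      using 1 by (auto simp: nth_Cons split: nat.splits)
  next
    assume h: "\<forall>k. Suc k < length (x # y # zs) \<longrightarrow> adj ((x # y # zs) ! k) ((x # y # zs) ! Suc k)"
    have "adj x y" using h[rule_format, of 0] by simp
    moreover have "\<forall>k. Suc k < length (y # zs) \<longrightarrow> adj ((y # zs) ! k) ((y # zs) ! Suc k)"
      using h by (metis Suc_less_eq length_Cons nth_Cons_Suc)
    ultimately show "pth adj (x # y # zs)" using 1 by simp
  qed
qed auto

lemma pin_card: "pin B xs = card {k. Suc k < length xs \<and> xs!k \<in> B \<and> xs!Suc k \<in> B}"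
proof (induction B xs rule: pin.induct)
  case (1 B x y zs)
  let ?S = "{k. Suc k < length (y#zs) \<and> (y#zs)!k \<in> B \<and> (y#zs)!Suc k \<in> B}"
  have eq: "{k. Suc k < length (x#y#zs) \<and> (x#y#zs)!k \<in> B \<and> (x#y#zs)!Suc k \<in> B}
        = (if x \<in> B \<and> y \<in> B then {0} else {}) \<union> Suc ` ?S"
  proof (intro set_eqI iffI)
    fix k assume k: "k \<in> {k. Suc k < length (x#y#zs) \<and> (x#y#zs)!k \<in> B \<and> (x#y#zs)!Suc k \<in> B}"
    show "k \<in> (if x \<in> B \<and> y \<in> B then {0} else {}) \<union> Suc ` ?S"
    proof (cases k)
      case 0 thus ?thesis using k by simp
    next
      case (Suc m) thus ?thesis using k by auto
    qed
  next
    fix k assume "k \<in> (if x \<in> B \<and> y \<in> B then {0} else {}) \<union> Suc ` ?S"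
    thus "k \<in> {k. Suc k < length (x#y#zs) \<and> (x#y#zs)!k \<in> B \<and> (x#y#zs)!Suc k \<in> B}"
      by (auto split: if_splits)
  qed
  have fin: "finite ?S" by (rule finite_subset[of _ "{..<length (y#zs)}"]) auto
  have "card (Suc ` ?S) = card ?S" by (simp add: card_image)
  moreover have "0 \<notin> Suc ` ?S" by auto
  ultimately show ?case using 1 fin unfolding eq by (simp add: card_insert_if)
qed auto

lemma cycle_pth: "is_cycle adj vs \<Longrightarrow> pth adj vs"
  unfolding pth_nth
proof (intro allI impI)
  fix k assume c: "is_cycle adj vs" and k: "Suc k < length vs"
  have "k < length vs" using k by simp
  hence "adj (vs ! k) (vs ! ((k + 1) mod length vs))" using c unfolding is_cycle_def by blast
  moreover have "(k + 1) mod length vs = Suc k" using k by simp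
  ultimately show "adj (vs ! k) (vs ! Suc k)" by simp
qed

lemma cycle_of_pth:
  assumes "length vs \<ge> 3" "distinct vs" "pth adj vs" "adj (last vs) (hd vs)"
  shows "is_cycle adj vs"
  unfolding is_cycle_def
proof (intro conjI allI impI)
  fix k assume k: "k < length vs"
  show "adj (vs ! k) (vs ! ((k + 1) mod length vs))"
  proof (cases "Suc k < length vs")
    case True thus ?thesis using assms(3) unfolding pth_nth by simp
  next
    case False
    hence "k = length vs - 1" using k by simp
    moreover have ne: "vs \<noteq> []" using assms(1) by auto
    moreover have "vs ! (length vs - 1) = last vs" using ne by (simp add: last_conv_nth)
    moreover have "vs ! 0 = hd vs" using ne by (simp add: hd_conv_nth)
    ultimately show ?thesis using assms k by simp
  qed
qed (use assms in auto)

lemma edges_inside_pin: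
  assumes "length vs \<ge> 2"
  shows "edges_inside vs B = pin B vs + (if last vs \<in> B \<and> hd vs \<in> B then 1 else 0)"
proof -
  let ?n = "length vs"
  let ?S = "{k. Suc k < ?n \<and> vs!k \<in> B \<and> vs!Suc k \<in> B}"
  have ne: "vs \<noteq> []" using assms by auto
  have lst: "vs ! (?n - 1) = last vs" using ne by (simp add: last_conv_nth)
  have hd: "vs ! 0 = hd vs" using ne by (simp add: hd_conv_nth)
  have eq: "{k. k < ?n \<and> vs ! k \<in> B \<and> vs ! ((k + 1) mod ?n) \<in> B}
     = ?S \<union> (if last vs \<in> B \<and> hd vs \<in> B then {?n - 1} else {})"
  proof (intro set_eqI iffI)
    fix k assume "k \<in> {k. k < ?n \<and> vs ! k \<in> B \<and> vs ! ((k + 1) mod ?n) \<in> B}"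
    thus "k \<in> ?S \<union> (if last vs \<in> B \<and> hd vs \<in> B then {?n - 1} else {})"
    proof (cases "Suc k < ?n")
      case True thus ?thesis using \<open>k \<in> _\<close> by simp
    next
      case False
      have "k < ?n" using \<open>k \<in> _\<close> by simp
      hence kk: "k = ?n - 1" using False by linarith
      hence "(k + 1) mod ?n = 0" using ne by simp
      thus ?thesis using \<open>k \<in> _\<close> kk lst hd by simp
    qed
  next
    fix k assume "k \<in> ?S \<union> (if last vs \<in> B \<and> hd vs \<in> B then {?n - 1} else {})"
    moreover have "Suc (?n - Suc 0) = ?n" using ne by simp
    ultimately show "k \<in> {k. k < ?n \<and> vs ! k \<in> B \<and> vs ! ((k + 1) mod ?n) \<in> B}"
      using lst hd assms by (auto split: if_splits)
  qed
  have fin: "finite ?S" by (rule finite_subset[of _ "{..<?n}"]) auto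
  have "?n - 1 \<notin> ?S" by auto
  thus ?thesis unfolding edges_inside_def eq pin_card using fin by (simp add: card_insert_if)
qed



fun wv :: "'a list \<Rightarrow> 'a list list \<Rightarrow> 'a list" where
  "wv (t#ts) (l#ls) = t # l @ wv ts ls"
| "wv ts [] = ts"
| "wv [] (l#ls) = []"

lemma wv_set: "length ls \<le> length ts \<Longrightarrow> set (wv ts ls) = set ts \<union> set (concat ls)"
  by (induction ts ls rule: wv.induct) auto

lemma wv_length: "length ls \<le> length ts \<Longrightarrow> length (wv ts ls) = length ts + length (concat ls)"
  by (induction ts ls rule: wv.induct) auto

lemma wv_hd: "ts \<noteq> [] \<Longrightarrow> hd (wv ts ls) = hd ts"
  by (induction ts ls rule: wv.induct) auto

lemma wv_last: "length ls < length ts \<Longrightarrow> last (wv ts ls) = last ts"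
proof (induction ts ls rule: wv.induct)
  case (1 t ts l ls)
  hence "ts \<noteq> []" by auto
  moreover have "wv ts ls \<noteq> []" using 1 by (cases ts; cases ls) auto
  ultimately show ?case using 1 by simp
qed auto

lemma wv_distinct:
  "length ls \<le> length ts \<Longrightarrow> distinct ts \<Longrightarrow> distinct (concat ls) \<Longrightarrow> set ts \<inter> set (concat ls) = {}
   \<Longrightarrow> distinct (wv ts ls)"
proof (induction ts ls rule: wv.induct)
  case (1 t ts l ls)
  have s: "set (wv ts ls) = set ts \<union> set (concat ls)" using 1 by (simp add: wv_set)
  have len: "length ls \<le> length ts" using 1(2) by simp
  have dts: "distinct ts" using 1(3) by simp
  have dc: "distinct (concat ls)" using 1(4) by simp
  have dj: "set ts \<inter> set (concat ls) = {}" using 1(5) by auto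
  have IH: "distinct (wv ts ls)" using 1(1)[OF len dts dc dj] .
  show ?case using 1 s IH by auto
qed auto

lemma wv_pth:
  assumes "length ls \<le> length ts" "set ts \<subseteq> B" "\<forall>l\<in>set ls. l \<noteq> [] \<and> pth adj l \<and> set l \<subseteq> A"
    "\<forall>u\<in>A \<union> B. \<forall>v\<in>B. u \<noteq> v \<longrightarrow> adj u v \<and> adj v u" "distinct (wv ts ls)"
  shows "pth adj (wv ts ls)"
  using assms
proof (induction ts ls rule: wv.induct)
  case (1 t ts l ls)
  have lne: "l \<noteq> []" and pl: "pth adj l" and lA: "set l \<subseteq> A" using 1 by auto
  have tB: "t \<in> B" using 1 by auto
  have IH: "pth adj (wv ts ls)" using 1 by simp
  have d: "distinct (t # l @ wv ts ls)" using 1 by simp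
  have a1: "adj t (hd l)"
  proof -
    have "hd l \<in> A" using lne lA by auto
    moreover have "t \<noteq> hd l" using d lne by auto
    ultimately show ?thesis using 1(5) tB by (metis Un_iff)
  qed
  have a2: "wv ts ls \<noteq> [] \<Longrightarrow> adj (last l) (hd (wv ts ls))"
  proof -
    assume ne: "wv ts ls \<noteq> []"
    hence "ts \<noteq> []" using 1 by (cases ts) auto
    hence "hd (wv ts ls) \<in> B" using 1 by (simp add: wv_hd) (metis hd_in_set subsetD)
    moreover have "last l \<in> A" using lne lA by auto
    moreover have "last l \<noteq> hd (wv ts ls)" using d lne ne by simp (metis disjoint_iff hd_in_set last_in_set)
    ultimately show ?thesis using 1(5) by blast
  qed
  show ?case using IH pl a1 a2 lne by (simp add: pth_append pth_Cons)
next
  case (2 ts)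
  show ?case unfolding pth_nth
  proof (intro allI impI)
    fix k assume k: "Suc k < length (wv ts [])"
    have "ts ! k \<in> B" "ts ! Suc k \<in> B" "ts ! k \<noteq> ts ! Suc k" using 2 k by (auto simp: nth_eq_iff_index_eq)
    thus "adj (wv ts [] ! k) (wv ts [] ! Suc k)" using 2 by auto
  qed
qed auto

lemma pin_disj: "set l \<inter> B = {} \<Longrightarrow> pin B l = 0"
  by (induction B l rule: pin.induct) auto

lemma pin_all: "set ts \<subseteq> B \<Longrightarrow> pin B ts = length ts - 1"
  by (induction B ts rule: pin.induct) auto

lemma wv_pin:
  assumes "length ls < length ts" "set ts \<subseteq> B" "\<forall>l\<in>set ls. l \<noteq> [] \<and> set l \<inter> B = {}"
  shows "pin B (wv ts ls) = length ts - length ls - 1"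
  using assms
proof (induction ts ls rule: wv.induct)
  case (1 t ts l ls)
  have lne: "l \<noteq> []" and lB: "set l \<inter> B = {}" using 1 by auto
  have IH: "pin B (wv ts ls) = length ts - length ls - 1" using 1 by simp
  have "pin B (t # l) = 0" using lne lB by (simp add: pin_Cons pin_disj) (metis disjoint_iff hd_in_set)
  moreover have "last (t#l) \<notin> B" using lne lB by (simp) (metis disjoint_iff last_in_set)
  ultimately have "pin B ((t # l) @ wv ts ls) = pin B (wv ts ls)" by (simp only: pin_append) simp
  thus ?case using IH by simp
qed (auto simp: pin_all)



lemma comb:
  fixes adj :: "'a \<Rightarrow> 'a \<Rightarrow> bool"
  assumes finA: "finite A" and finB: "finite B" and disj: "A \<inter> B = {}" and y3: "card B \<ge> 3"
    and H: "\<forall>u\<in>A \<union> B. \<forall>v\<in>B. u \<noteq> v \<longrightarrow> adj u v \<and> adj v u"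
    and cov: "covered adj A x"
  shows "covered adj (A \<union> B) (nat (max 1 (int x - int (card B) + 1))) \<and>
         (card B > x \<longrightarrow> (\<exists>vs. is_cycle adj vs \<and> set vs = A \<union> B \<and> edges_inside vs B = card B - x))"
proof -
  obtain P where P: "finite P" "\<Union>P = A" "pairwise disjnt P" "{} \<notin> P" "card P = x"
    "\<forall>p\<in>P. (\<exists>v. p = {v}) \<or> (\<exists>vs. is_cycle adj vs \<and> set vs = p)"
    using cov unfolding covered_def by blast
  obtain ps where ps: "set ps = P" "distinct ps" using finite_distinct_list[OF P(1)] by blast
  have lps: "length ps = x" using ps P(5) distinct_card by fastforce
  define f where "f p = (SOME l. l \<noteq> [] \<and> distinct l \<and> set l = p \<and> pth adj l)" for p
  have fP: "f p \<noteq> [] \<and> distinct (f p) \<and> set (f p) = p \<and> pth adj (f p)" if "p \<in> P" for p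
  proof -
    have "\<exists>l. l \<noteq> [] \<and> distinct l \<and> set l = p \<and> pth adj l"
    proof (cases "\<exists>v. p = {v}")
      case True
      then obtain v where "p = {v}" by blast
      thus ?thesis by (intro exI[of _ "[v]"]) auto
    next
      case False
      have "(\<exists>v. p = {v}) \<or> (\<exists>vs. is_cycle adj vs \<and> set vs = p)" using P(6) that by blast
      then obtain vs where c: "is_cycle adj vs" "set vs = p" using False by blast
      have "pth adj vs" using cycle_pth[OF c(1)] .
      moreover have "distinct vs" "length vs \<ge> 3" using c(1) unfolding is_cycle_def by blast+
      ultimately show ?thesis using c(2) by (intro exI[of _ vs]) auto
    qed
    thus ?thesis unfolding f_def by (rule someI_ex)
  qed
  define ls where "ls = map f ps"
  have injf: "inj_on f P"
  proof (rule inj_onI)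
    fix p q assume "p \<in> P" "q \<in> P" "f p = f q"
    thus "p = q" using fP[of p] fP[of q] by metis
  qed
  have dls: "distinct ls" unfolding ls_def using ps injf by (simp add: distinct_map)
  have dconc: "distinct (concat ls)"
  proof (rule distinct_concat)
    show "distinct ls" by (rule dls)
    show "\<And>ys. ys \<in> set ls \<Longrightarrow> distinct ys" unfolding ls_def using ps fP by auto
    show "\<And>ys zs. ys \<in> set ls \<Longrightarrow> zs \<in> set ls \<Longrightarrow> ys \<noteq> zs \<Longrightarrow> set ys \<inter> set zs = {}"
    proof -
      fix ys zs assume "ys \<in> set ls" "zs \<in> set ls" "ys \<noteq> zs"
      then obtain p q where pq: "p \<in> P" "q \<in> P" "ys = f p" "zs = f q" unfolding ls_def using ps by auto
      hence "p \<noteq> q" using \<open>ys \<noteq> zs\<close> by auto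
      hence "disjnt p q" using P(3) pq unfolding pairwise_def by blast
      thus "set ys \<inter> set zs = {}" using pq fP by (auto simp: disjnt_def)
    qed
  qed
  have setls: "set (concat (take m ls)) = \<Union>(set (take m ps))" for m
    unfolding ls_def take_map using ps fP by (auto dest: in_set_takeD)
  have lsprop: "\<forall>l\<in>set ls. l \<noteq> [] \<and> pth adj l \<and> set l \<subseteq> A \<and> set l \<inter> B = {}"
    unfolding ls_def using ps fP P(2) disj by auto
  obtain ts where ts: "set ts = B" "distinct ts" using finite_distinct_list[OF finB] by blast
  have lts: "length ts = card B" using ts distinct_card by fastforce
  define m where "m = min x (card B)"
  define vs where "vs = wv ts (take m ls)"
  have lt: "length (take m ls) \<le> length ts" unfolding m_def ls_def using lps lts by simp
  have ltake: "length (take m ls) = m" unfolding m_def ls_def using lps by simp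
  have tsB: "set ts \<subseteq> B" using ts by simp
  have dtake: "distinct (concat (take m ls))"
    using dconc by (metis append_take_drop_id concat_append distinct_append)
  have concA: "set (concat (take m ls)) \<subseteq> A"
    using lsprop by (auto dest: in_set_takeD)
  have dvs: "distinct vs" unfolding vs_def
    using wv_distinct[OF lt ts(2) dtake] concA disj ts by auto
  have setvs: "set vs = B \<union> \<Union>(set (take m ps))" unfolding vs_def using wv_set[OF lt] setls ts by simp
  have lvs: "length vs \<ge> 3" unfolding vs_def using wv_length[OF lt] lts y3 by simp
  have tsne: "ts \<noteq> []" using lts y3 by auto
  have hdB: "hd vs \<in> B" unfolding vs_def using wv_hd[OF tsne] tsne ts by auto
  have pvs: "pth adj vs" unfolding vs_def
  proof (rule wv_pth[where A=A, OF lt tsB _ _ dvs[unfolded vs_def]])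
    show "\<forall>l\<in>set (take m ls). l \<noteq> [] \<and> pth adj l \<and> set l \<subseteq> A" using lsprop by (auto dest: in_set_takeD)
    show "\<forall>u\<in>A \<union> B. \<forall>v\<in>B. u \<noteq> v \<longrightarrow> adj u v \<and> adj v u" by (rule H)
  qed
  have cyc: "is_cycle adj vs"
  proof (rule cycle_of_pth[OF lvs dvs pvs])
    have vsne: "vs \<noteq> []" using lvs by auto
    have "last vs \<in> A \<union> B" using setvs vsne last_in_set[OF vsne] P(2) ps
      by (auto dest: in_set_takeD)
    moreover have "last vs \<noteq> hd vs"
    proof
      assume "last vs = hd vs"
      hence "vs ! (length vs - 1) = vs ! 0" using vsne by (simp add: last_conv_nth hd_conv_nth)
      moreover have i1: "length vs - 1 < length vs" "0 < length vs" using lvs by auto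
      ultimately have "length vs - 1 = 0" using nth_eq_iff_index_eq[OF dvs i1] by blast
      thus False using lvs by simp
    qed
    ultimately show "adj (last vs) (hd vs)" using H hdB by blast
  qed
  have part1: "covered adj (A \<union> B) (nat (max 1 (int x - int (card B) + 1)))"
  proof -
    define Q where "Q = set (drop m ps)"
    have QP: "Q \<subseteq> P" unfolding Q_def using ps by (auto dest: in_set_dropD)
    have Qsub: "\<forall>q\<in>Q. q \<subseteq> A" using QP P(2) by auto
    have Bne: "B \<noteq> {}" using y3 by auto
    have notin: "set vs \<notin> Q"
    proof
      assume "set vs \<in> Q"
      hence "B \<subseteq> A" using Qsub setvs by auto
      thus False using Bne disj by auto
    qed
    have cardQ: "card Q = x - m" unfolding Q_def using ps(2) lps by (simp add: distinct_card)
    have disjQ: "disjnt (set vs) q" if "q \<in> Q" for q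
    proof -
      have "q \<notin> set (take m ps)" using that ps(2) unfolding Q_def
        by (metis append_take_drop_id disjoint_iff distinct_append)
      have "\<forall>p\<in>set (take m ps). disjnt p q"
      proof
        fix p assume p: "p \<in> set (take m ps)"
        hence "p \<noteq> q" "p \<in> P" using \<open>q \<notin> set (take m ps)\<close> ps by (auto dest: in_set_takeD)
        moreover have "q \<in> P" using QP that by auto
        ultimately show "disjnt p q" using P(3) unfolding pairwise_def by blast
      qed
      moreover have "disjnt B q" using Qsub that disj by (auto simp: disjnt_def)
      ultimately show ?thesis unfolding setvs by (auto simp: disjnt_def)
    qed
    show ?thesis unfolding covered_def
    proof (intro exI[of _ "insert (set vs) Q"] conjI)
      show "finite (insert (set vs) Q)" unfolding Q_def by simp
      have "\<Union>(set (take m ps)) \<union> \<Union>Q = A" unfolding Q_def using P(2) ps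
        by (metis Union_Un_distrib append_take_drop_id set_append)
      thus "\<Union>(insert (set vs) Q) = A \<union> B" using setvs by auto
      show "pairwise disjnt (insert (set vs) Q)"
        using P(3) QP disjQ by (auto simp: pairwise_insert pairwise_mono disjnt_sym)
      show "{} \<notin> insert (set vs) Q" using P(4) QP lvs by auto
      show "card (insert (set vs) Q) = nat (max 1 (int x - int (card B) + 1))"
        using notin cardQ unfolding Q_def m_def by simp
      show "\<forall>p\<in>insert (set vs) Q. (\<exists>v. p = {v}) \<or> (\<exists>vs. is_cycle adj vs \<and> set vs = p)"
        using P(6) QP cyc by auto
    qed
  qed
  have part2: "\<exists>vs. is_cycle adj vs \<and> set vs = A \<union> B \<and> edges_inside vs B = card B - x"
    if xy: "card B > x"
  proof -
    have mx: "m = x" unfolding m_def using xy by simp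
    have tk: "take m ls = ls" unfolding mx ls_def using lps by simp
    have tkp: "take m ps = ps" unfolding mx using lps by simp
    have lt2: "length ls < length ts" unfolding ls_def using lps lts xy by simp
    have lastB: "last vs \<in> B" unfolding vs_def tk using wv_last[OF lt2] tsne ts by auto
    have "pin B vs = card B - x - 1" unfolding vs_def tk
      using wv_pin[OF lt2 tsB] lsprop lts unfolding ls_def using lps by simp
    hence "edges_inside vs B = card B - x"
      using edges_inside_pin[of vs B] lvs lastB hdB xy by simp
    moreover have "set vs = A \<union> B" using setvs tkp ps P(2) by auto
    ultimately show ?thesis using cyc by blast
  qed
  show ?thesis using part1 part2 by blast
qed



lemma hdist_sym: "hdist p q = hdist q p"
proof -
  have "cos (snd p - snd q) = cos (snd q - snd p)" by (metis cos_minus minus_diff_eq)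
  thus ?thesis unfolding hdist_def by (simp add: mult.commute)
qed

lemma tile_mem:
  assumes "(r,t) \<in> tile R i j"
  shows "0 \<le> r" "r < R" "R - 2*(real i+1)*ln 2 \<le> r" "r < R - 2*real i*ln 2" "(r,t) \<in> sector R i j"
  using assms unfolding tile_def hdisk_def by auto

lemma adj_lemma:
  assumes R: "R \<ge> 500" and ii: "int i \<le> imax R" and p: "p \<in> tile R i j"
    and q: "fst q \<ge> R - 2*(real i+1)*ln 2" "fst q < R" "fst q \<ge> 0" "q \<in> sector R i j"
    and ne: "p \<noteq> q"
  shows "hadj R p q \<and> hadj R q p"
proof -
  obtain a t1 where pp: "p = (a,t1)" by (cases p)
  obtain b t2 where qq: "q = (b,t2)" by (cases q)
  have "hdist (a,t1) (b,t2) \<le> R"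
    using geo[OF R ii, of a b t1 j t2] tile_mem[of a t1 R i j] p q unfolding pp qq by auto
  thus ?thesis using ne hdist_sym[of p q] unfolding hadj_def pp qq by auto
qed

lemma edges_inside_restrict:
  assumes "set vs \<subseteq> V"
  shows "edges_inside vs (V \<inter> T) = edges_inside vs T"
proof -
  have "{k. k < length vs \<and> vs ! k \<in> V \<inter> T \<and> vs ! ((k + 1) mod length vs) \<in> V \<inter> T}
      = {k. k < length vs \<and> vs ! k \<in> T \<and> vs ! ((k + 1) mod length vs) \<in> T}"
  proof (intro Collect_cong iffI)
    fix k assume k: "k < length vs \<and> vs ! k \<in> T \<and> vs ! ((k + 1) mod length vs) \<in> T"
    hence "(k + 1) mod length vs < length vs" by (intro mod_less_divisor) auto
    hence "vs ! ((k + 1) mod length vs) \<in> V" "vs ! k \<in> V" using assms k by (auto dest!: nth_mem)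
    thus "k < length vs \<and> vs ! k \<in> V \<inter> T \<and> vs ! ((k + 1) mod length vs) \<in> V \<inter> T" using k by auto
  qed auto
  thus ?thesis unfolding edges_inside_def by simp
qed

theorem mainTheorem8:
  "\<exists>R0::real. \<forall>R \<ge> R0. \<forall>(V::hpoint set) i j x.
     finite V \<and> V \<subseteq> hdisk R \<and> admissible R i j \<longrightarrow>
     (let T = tile R i j;
          S = {v \<in> V. \<exists>i' j'. admissible R i' j' \<and> below R i' j' i j \<and> (i', j') \<noteq> (i, j) \<and> v \<in> tile R i' j'};
          y = card (V \<inter> T)
      in y \<ge> 3 \<and> covered (hadj R) S x \<longrightarrow>
           covered (hadj R) (S \<union> (V \<inter> T)) (nat (max 1 (int x - int y + 1))) \<and>
           (y > x \<longrightarrow> (\<exists>vs. is_cycle (hadj R) vs \<and> set vs = S \<union> (V \<inter> T) \<and>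
                                edges_inside vs T = y - x)))"
proof (intro exI[of _ 500] allI impI)
  fix R :: real and V :: "hpoint set" and i j x
  assume R: "R \<ge> 500" and hyp: "finite V \<and> V \<subseteq> hdisk R \<and> admissible R i j"
  define T where "T = tile R i j"
  define S where "S = {v \<in> V. \<exists>i' j'. admissible R i' j' \<and> below R i' j' i j \<and> (i', j') \<noteq> (i, j) \<and> v \<in> tile R i' j'}"
  have ii: "int i \<le> imax R" using hyp unfolding admissible_def by simp
  have finS: "finite S" unfolding S_def using hyp by simp
  have finB: "finite (V \<inter> T)" using hyp by simp
  have npos: "ntiles R i > 0" unfolding ntiles_def by simp
  have disj: "S \<inter> (V \<inter> T) = {}"
  proof (rule ccontr)
    assume "S \<inter> (V \<inter> T) \<noteq> {}"
    then obtain v i' j' where v: "v \<in> tile R i' j'" "v \<in> tile R i j" "below R i' j' i j" "(i', j') \<noteq> (i, j)"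
      unfolding S_def T_def by blast
    obtain r t where vv: "v = (r,t)" by (cases v)
    have ile: "i' \<le> i" using v(3) unfolding below_def by simp
    show False
    proof (cases "i' = i")
      case False
      hence "real i' + 1 \<le> real i" using ile by simp
      hence "R - 2*real i*ln 2 \<le> R - 2*(real i'+1)*ln 2" by (simp add: mult_right_mono)
      thus False using tile_mem(3)[of r t R i' j'] tile_mem(4)[of r t R i j] v unfolding vv by linarith
    next
      case True
      hence jj: "j' \<noteq> j" using v(4) by simp
      have s1: "2*pi*real j/ntiles R i < t" "t \<le> 2*pi*(real j+1)/ntiles R i"
        using tile_mem(5)[of r t R i j] v(2) unfolding vv sector_def by auto
      have s2: "2*pi*real j'/ntiles R i < t" "t \<le> 2*pi*(real j'+1)/ntiles R i"
        using tile_mem(5)[of r t R i' j'] v(1) True unfolding vv sector_def by auto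
      show False
      proof (cases "j' < j")
        case True
        hence "real j' + 1 \<le> real j" by simp
        hence "2*pi*(real j'+1)/ntiles R i \<le> 2*pi*real j/ntiles R i"
          using npos by (intro divide_right_mono mult_left_mono) auto
        thus False using s1 s2 by linarith
      next
        case False
        hence "real j + 1 \<le> real j'" using jj by simp
        hence "2*pi*(real j+1)/ntiles R i \<le> 2*pi*real j'/ntiles R i"
          using npos by (intro divide_right_mono mult_left_mono) auto
        thus False using s1 s2 by linarith
      qed
    qed
  qed
  have H: "\<forall>u\<in>S \<union> (V \<inter> T). \<forall>v\<in>V \<inter> T. u \<noteq> v \<longrightarrow> hadj R u v \<and> hadj R v u"
  proof (intro ballI impI)
    fix u v assume u: "u \<in> S \<union> (V \<inter> T)" and v: "v \<in> V \<inter> T" and ne: "u \<noteq> v"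
    obtain b t2 where uu: "u = (b,t2)" by (cases u)
    have vt: "v \<in> tile R i j" using v unfolding T_def by simp
    have props: "b \<ge> R - 2*(real i+1)*ln 2 \<and> b < R \<and> b \<ge> 0 \<and> u \<in> sector R i j"
    proof (cases "u \<in> S")
      case True
      then obtain i' j' where w: "below R i' j' i j" "u \<in> tile R i' j'" unfolding S_def by blast
      have ile: "i' \<le> i" and sub: "tile R i' j' \<subseteq> sector R i j" using w(1) unfolding below_def by auto
      have ineq: "R - 2*(real i+1)*ln 2 \<le> R - 2*(real i'+1)*ln 2" using ile by (simp add: mult_right_mono)
      have m: "0 \<le> b" "b < R" "R - 2*(real i'+1)*ln 2 \<le> b" "(b,t2) \<in> sector R i j"
        using tile_mem[of b t2 R i' j'] w(2) sub unfolding uu by auto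
      have "R - 2*(real i+1)*ln 2 \<le> b" using m(3) ineq by linarith
      thus ?thesis using m unfolding uu by simp
    next
      case False
      hence "u \<in> tile R i j" using u unfolding T_def by simp
      thus ?thesis using tile_mem[of b t2 R i j] unfolding uu by auto
    qed
    have "hadj R v u \<and> hadj R u v"
      using adj_lemma[OF R ii vt, of u] props ne unfolding uu by auto
    thus "hadj R u v \<and> hadj R v u" by simp
  qed
  show "let T = tile R i j;
          S = {v \<in> V. \<exists>i' j'. admissible R i' j' \<and> below R i' j' i j \<and> (i', j') \<noteq> (i, j) \<and> v \<in> tile R i' j'};
          y = card (V \<inter> T)
      in y \<ge> 3 \<and> covered (hadj R) S x \<longrightarrow>
           covered (hadj R) (S \<union> (V \<inter> T)) (nat (max 1 (int x - int y + 1))) \<and>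
           (y > x \<longrightarrow> (\<exists>vs. is_cycle (hadj R) vs \<and> set vs = S \<union> (V \<inter> T) \<and>
                                edges_inside vs T = y - x))"
    unfolding Let_def T_def[symmetric] S_def[symmetric]
  proof (intro impI)
    assume a: "3 \<le> card (V \<inter> T) \<and> covered (hadj R) S x"
    have c: "covered (hadj R) (S \<union> (V \<inter> T)) (nat (max 1 (int x - int (card (V \<inter> T)) + 1))) \<and>
         (card (V \<inter> T) > x \<longrightarrow> (\<exists>vs. is_cycle (hadj R) vs \<and> set vs = S \<union> (V \<inter> T) \<and>
             edges_inside vs (V \<inter> T) = card (V \<inter> T) - x))"
      using comb[OF finS finB disj _ H] a by blast
    have SV: "S \<union> (V \<inter> T) \<subseteq> V" unfolding S_def by auto
    show "covered (hadj R) (S \<union> (V \<inter> T)) (nat (max 1 (int x - int (card (V \<inter> T)) + 1))) \<and>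
         (card (V \<inter> T) > x \<longrightarrow> (\<exists>vs. is_cycle (hadj R) vs \<and> set vs = S \<union> (V \<inter> T) \<and>
             edges_inside vs T = card (V \<inter> T) - x))"
      using c edges_inside_restrict SV by metis
  qed
qed

end
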